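(* Let $(S,M)$ be a surface with marked points and empty boundary, and let $(S,M')$ be obtained by adding one more puncture, $M'=M\cup\{p\}$. (a) If $(S,M)$ has an ideal triangulation satisfying (T3), then so does $(S,M')$. (b) If $(S,M)$ has an ideal triangulation satisfying (T3$\tfrac12$), then so does $(S,M')$. (c) If $(S,M)$ has an ideal triangulation satisfying (T4), then so does $(S,M')$.
   Context: $(S,M)$: $S$ compact, connected, oriented surface without boundary, $M$ a finite non-empty set of punctures. Arcs incident to a puncture are counted with multiplicity (an arc with both endpoints at the puncture counts twice). (T3): at each puncture at least three arcs of $T$ are incident. (T3$\tfrac12$): $T$ has (T3) and every arc of $T$ has an endpoint with at least four incident arcs. (T4): at each puncture at least four arcs of $T$ are incident. *)

theory Defs
  imports "HOL-Combinatorics.Permutations"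
begin

text \<open>Combinatorial model of an ideal triangulation of a closed oriented punctured
surface (S,M): a triangulated combinatorial map.  Darts D (half-edges), s = rotation
of darts around each vertex (puncture), a = fixed-point-free involution pairing the
two halves of each arc; faces are the orbits of s o a, all of size 3 (triangles,
self-folded ones allowed).  Punctures = s-orbits; the number of arcs incident to a
puncture counted with multiplicity is the size of its s-orbit.\<close>

definition dorbit :: "(nat \<Rightarrow> nat) \<Rightarrow> nat \<Rightarrow> nat set" where
  "dorbit f x = {(f ^^ k) x | k. True}"

definition tri_map :: "nat set \<Rightarrow> (nat \<Rightarrow> nat) \<Rightarrow> (nat \<Rightarrow> nat) \<Rightarrow> bool" where
  "tri_map D s a \<longleftrightarrow>
     finite D \<and> D \<noteq> {} \<and> s permutes D \<and> a permutes D \<and>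
     (\<forall>x\<in>D. a x \<noteq> x \<and> a (a x) = x) \<and>
     (\<forall>x\<in>D. ((s \<circ> a) ^^ 3) x = x \<and> (s \<circ> a) x \<noteq> x) \<and>
     (\<forall>x\<in>D. \<forall>y\<in>D. (x, y) \<in> ({(z, s z) | z. z \<in> D} \<union> {(z, a z) | z. z \<in> D})\<^sup>*)"

definition punctures :: "nat set \<Rightarrow> (nat \<Rightarrow> nat) \<Rightarrow> nat set set" where
  "punctures D s = dorbit s ` D"

text \<open>Euler characteristic V - E + F; E = |D|/2 arcs, F = |D|/3 triangles.\<close>
definition euler_char :: "nat set \<Rightarrow> (nat \<Rightarrow> nat) \<Rightarrow> int" where
  "euler_char D s = int (card (punctures D s)) - int (card D div 2) + int (card D div 3)"

definition is_triangulation_of :: "nat \<Rightarrow> nat \<Rightarrow> nat set \<Rightarrow> (nat \<Rightarrow> nat) \<Rightarrow> (nat \<Rightarrow> nat) \<Rightarrow> bool" where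
  "is_triangulation_of g n D s a \<longleftrightarrow>
     tri_map D s a \<and> card (punctures D s) = n \<and> euler_char D s = 2 - 2 * int g"

definition valency :: "(nat \<Rightarrow> nat) \<Rightarrow> nat \<Rightarrow> nat" where
  "valency s x = card (dorbit s x)"

definition T3 :: "nat set \<Rightarrow> (nat \<Rightarrow> nat) \<Rightarrow> (nat \<Rightarrow> nat) \<Rightarrow> bool" where
  "T3 D s a \<longleftrightarrow> (\<forall>x\<in>D. valency s x \<ge> 3)"

definition T3half :: "nat set \<Rightarrow> (nat \<Rightarrow> nat) \<Rightarrow> (nat \<Rightarrow> nat) \<Rightarrow> bool" where
  "T3half D s a \<longleftrightarrow> T3 D s a \<and> (\<forall>x\<in>D. valency s x \<ge> 4 \<or> valency s (a x) \<ge> 4)"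

definition T4 :: "nat set \<Rightarrow> (nat \<Rightarrow> nat) \<Rightarrow> (nat \<Rightarrow> nat) \<Rightarrow> bool" where
  "T4 D s a \<longleftrightarrow> (\<forall>x\<in>D. valency s x \<ge> 4)"

definition has_triangulation ::
  "nat \<Rightarrow> nat \<Rightarrow> (nat set \<Rightarrow> (nat \<Rightarrow> nat) \<Rightarrow> (nat \<Rightarrow> nat) \<Rightarrow> bool) \<Rightarrow> bool" where
  "has_triangulation g n P \<longleftrightarrow> (\<exists>D s a. is_triangulation_of g n D s a \<and> P D s a)"

end

theory Submission
  imports Defs
begin


lemma dorbit_self: "x \<in> dorbit f x"
  unfolding dorbit_def by (auto intro: exI[of _ 0])

lemma dorbit_step: assumes "u \<in> dorbit f x" shows "f u \<in> dorbit f x"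
proof -
  obtain k where "u = (f ^^ k) x" using assms unfolding dorbit_def by auto
  then have "f u = (f ^^ Suc k) x" by simp
  then show ?thesis unfolding dorbit_def by blast
qed

lemma dorbit_min: assumes "x \<in> S" "\<And>u. u \<in> S \<Longrightarrow> f u \<in> S" shows "dorbit f x \<subseteq> S"
proof
  fix y assume "y \<in> dorbit f x"
  then obtain k where "y = (f ^^ k) x" unfolding dorbit_def by auto
  moreover have "(f ^^ k) x \<in> S" by (induction k) (auto simp: assms)
  ultimately show "y \<in> S" by simp
qed

lemma dorbit_trans: "y \<in> dorbit f x \<Longrightarrow> dorbit f y \<subseteq> dorbit f x"
  by (rule dorbit_min) (auto intro: dorbit_step)

lemma dorbit_sub: "f permutes A \<Longrightarrow> x \<in> A \<Longrightarrow> dorbit f x \<subseteq> A"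
  by (rule dorbit_min) (auto simp: permutes_in_image)

lemma dorbit_agree: assumes "\<And>u. u \<in> dorbit g x \<Longrightarrow> h u = g u" shows "dorbit h x = dorbit g x"
proof -
  have "(h ^^ k) x = (g ^^ k) x" for k
  proof (induction k)
    case (Suc k)
    have "(g ^^ k) x \<in> dorbit g x" unfolding dorbit_def by auto
    then show ?case using Suc assms by simp
  qed simp
  then show ?thesis unfolding dorbit_def by auto
qed

lemma dorbit_back: assumes "f permutes A" "finite A" shows "x \<in> dorbit f (f x)"
proof -
  have "permutation f" using assms permutation_permutes by blast
  then obtain n where n: "n > 0" "(f ^^ n) x = x" by (rule permutation_self)
  then have "(f ^^ (n - 1)) (f x) = x" by (metis Suc_diff_1 funpow_Suc_right o_apply)
  then have "\<exists>k. x = (f ^^ k) (f x)" by metis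
  then show ?thesis unfolding dorbit_def by simp
qed

lemma dorbit_finite: "f permutes A \<Longrightarrow> finite A \<Longrightarrow> x \<in> A \<Longrightarrow> finite (dorbit f x)"
  by (rule finite_subset[OF dorbit_sub])

locale ins =
  fixes f g :: "nat \<Rightarrow> nat" and A :: "nat set" and c r :: nat
  assumes perm: "f permutes A" and cA: "c \<in> A" and rA: "r \<notin> A"
    and gdef: "g = f(c := r, r := f c)"
begin

lemma fr: "f r = r" using perm rA by (simp add: permutes_not_in)
lemma fcA: "f c \<in> A" using perm cA by (simp add: permutes_in_image)
lemma rc: "r \<noteq> c" using cA rA by auto
lemma cr: "c \<noteq> r" using cA rA by auto

lemma g_perm: "g permutes insert r A"
proof -
  have "g = f \<circ> Transposition.transpose c r"
    by (rule ext) (auto simp: gdef fr Transposition.transpose_def)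
  moreover have "Transposition.transpose c r permutes insert r A"
    using cA by (intro permutes_swap_id) auto
  moreover have "f permutes insert r A" using perm by (rule permutes_subset) auto
  ultimately show ?thesis by (simp add: permutes_compose)
qed

lemma sub: "dorbit f x \<subseteq> dorbit g x"
proof (rule dorbit_min[OF dorbit_self])
  fix u assume u: "u \<in> dorbit g x"
  show "f u \<in> dorbit g x"
  proof (cases "u = c")
    case True
    then have "f u = g (g u)" using gdef rc by simp
    then show ?thesis using u dorbit_step by metis
  next
    case False
    then show ?thesis using u dorbit_step[OF u] by (cases "u = r") (auto simp: gdef fr)
  qed
qed

lemma pi: "y \<in> dorbit g x \<Longrightarrow> (if y = r then c else y) \<in> dorbit f (if x = r then c else x)"
proof -
  let ?p = "\<lambda>y. if y = r then c else y"
  have "dorbit g x \<subseteq> {y. ?p y \<in> dorbit f (?p x)}"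
  proof (rule dorbit_min)
    show "x \<in> {y. ?p y \<in> dorbit f (?p x)}" by (simp add: dorbit_self)
  next
    fix u assume u: "u \<in> {y. ?p y \<in> dorbit f (?p x)}"
    show "g u \<in> {y. ?p y \<in> dorbit f (?p x)}"
    proof (cases "u = c")
      case True then show ?thesis using u rc by (simp add: gdef)
    next
      case False
      show ?thesis
      proof (cases "u = r")
        case True then show ?thesis using u rc fcA rA dorbit_step[of c f "?p x"]
          by (auto simp: gdef)
      next
        case False2: False
        have "f u \<noteq> r" using rA perm False2 by (metis fr permutes_inverses(2))
        then show ?thesis using u False False2 dorbit_step[of u f "?p x"] by (simp add: gdef)
      qed
    qed
  qed
  then show "y \<in> dorbit g x \<Longrightarrow> ?p y \<in> dorbit f (?p x)" by blast
qed

lemma orb_A: assumes "x \<in> A" shows "dorbit g x = dorbit f x \<union> (if c \<in> dorbit f x then {r} else {})"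
proof
  have xr: "x \<noteq> r" using assms rA by auto
  show "dorbit g x \<subseteq> dorbit f x \<union> (if c \<in> dorbit f x then {r} else {})"
  proof
    fix y assume y: "y \<in> dorbit g x"
    from pi[OF y] xr show "y \<in> dorbit f x \<union> (if c \<in> dorbit f x then {r} else {})"
      by (cases "y = r") auto
  qed
  show "dorbit f x \<union> (if c \<in> dorbit f x then {r} else {}) \<subseteq> dorbit g x"
  proof -
    have "c \<in> dorbit f x \<Longrightarrow> r \<in> dorbit g x"
      using sub dorbit_step[of c g x] cr by (auto simp: gdef)
    then show ?thesis using sub by auto
  qed
qed

lemma orb_r_sup: "insert r (dorbit f (f c)) \<subseteq> dorbit g r"
proof -
  have "f c \<in> dorbit g r" using dorbit_step[OF dorbit_self[of r g]] rc by (simp add: gdef)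
  then have "dorbit g (f c) \<subseteq> dorbit g r" by (rule dorbit_trans)
  then show ?thesis using sub[of "f c"] dorbit_self[of r g] by auto
qed

lemma orb_r: assumes fin: "finite A" shows "dorbit g r = insert r (dorbit f (f c))"
proof
  show "insert r (dorbit f (f c)) \<subseteq> dorbit g r" by (rule orb_r_sup)
  have eq: "dorbit f c \<subseteq> dorbit f (f c)"
    using dorbit_trans[OF dorbit_back[OF perm fin]] .
  show "dorbit g r \<subseteq> insert r (dorbit f (f c))"
  proof
    fix y assume y: "y \<in> dorbit g r"
    from pi[OF y] eq show "y \<in> insert r (dorbit f (f c))" by (cases "y = r") auto
  qed
qed

lemma card_orbs: assumes fin: "finite A" shows "card (dorbit g ` insert r A) = card (dorbit f ` A)"
proof -
  let ?i = "\<lambda>X. if c \<in> X then insert r X else X"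
  have "dorbit g ` insert r A = ?i ` (dorbit f ` A)"
  proof -
    have "dorbit g r = ?i (dorbit f (f c))"
      using orb_r[OF fin] dorbit_back[OF perm fin, of c] by simp
    moreover have "\<And>x. x \<in> A \<Longrightarrow> dorbit g x = ?i (dorbit f x)" using orb_A by auto
    ultimately show ?thesis using fcA by (auto simp: image_iff)
  qed
  moreover have "inj_on ?i (dorbit f ` A)"
  proof (rule inj_onI)
    fix X1 X2 assume "X1 \<in> dorbit f ` A" "X2 \<in> dorbit f ` A" "?i X1 = ?i X2"
    moreover have "X1 \<subseteq> A" "X2 \<subseteq> A" using calculation dorbit_sub[OF perm] by auto
    ultimately have "?i X1 \<inter> A = ?i X2 \<inter> A" by simp
    then show "X1 = X2" using \<open>X1 \<subseteq> A\<close> \<open>X2 \<subseteq> A\<close> rA by (auto split: if_splits)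
  qed
  ultimately show ?thesis using card_image by metis
qed

end



lemma invol_permutes:
  assumes "\<And>x. x \<in> S \<Longrightarrow> f x \<in> S \<and> f (f x) = x" "\<And>x. x \<notin> S \<Longrightarrow> f x = x"
  shows "f permutes S"
proof (rule bij_imp_permutes)
  show "bij_betw f S S" by (rule bij_betw_byWitness[where f' = f]) (use assms in auto)
qed (use assms in auto)

lemma T3_s: assumes "s permutes D" "finite D" "x \<in> D" "3 \<le> valency s x"
  shows "s x \<noteq> x" "s (s x) \<noteq> x"
proof -
  have fin: "finite (dorbit s x)" using dorbit_finite assms by blast
  show "s x \<noteq> x"
  proof
    assume "s x = x"
    then have "dorbit s x \<subseteq> {x}" by (intro dorbit_min) auto
    then have "card (dorbit s x) \<le> card {x}" by (intro card_mono) auto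
    then have "card (dorbit s x) \<le> 1" by simp
    then show False using assms(4) unfolding valency_def by simp
  qed
  show "s (s x) \<noteq> x"
  proof
    assume "s (s x) = x"
    then have "dorbit s x \<subseteq> {x, s x}" by (intro dorbit_min) auto
    then have "card (dorbit s x) \<le> card {x, s x}" by (intro card_mono) auto
    moreover have "card {x, s x} \<le> 2" by (cases "x = s x") auto
    ultimately have "card (dorbit s x) \<le> 2" by linarith
    then show False using assms(4) unfolding valency_def by simp
  qed
qed

lemma construct:
  assumes tri: "tri_map D s a" and t3: "T3 D s a"
  shows "\<exists>D' s' a'. tri_map D' s' a' \<and> card (punctures D' s') = Suc (card (punctures D s)) \<and>
     euler_char D' s' = euler_char D s \<and> D \<subseteq> D' \<and>
     (\<forall>x\<in>D. valency s x \<le> valency s' x) \<and> (\<forall>x\<in>D'-D. 4 \<le> valency s' x) \<and>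
     (\<forall>x\<in>D. a' x = a x \<or> 4 \<le> valency s' (a' x))"
proof -
  have finD: "finite D" and neD: "D \<noteq> {}" and sp: "s permutes D" and ap: "a permutes D"
    and ainv: "\<And>x. x \<in> D \<Longrightarrow> a x \<noteq> x \<and> a (a x) = x"
    and face: "\<And>x. x \<in> D \<Longrightarrow> ((s \<circ> a) ^^ 3) x = x \<and> (s \<circ> a) x \<noteq> x"
    and conn: "\<And>x y. x \<in> D \<Longrightarrow> y \<in> D \<Longrightarrow> (x, y) \<in> ({(z, s z) | z. z \<in> D} \<union> {(z, a z) | z. z \<in> D})\<^sup>*"
    using tri unfolding tri_map_def by auto
  have f3: "\<And>x. x \<in> D \<Longrightarrow> s (a (s (a (s (a x))))) = x" using face by (simp add: numeral_3_eq_3)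
  have fn: "\<And>x. x \<in> D \<Longrightarrow> s (a x) \<noteq> x" using face by simp
  have sD: "\<And>x. x \<in> D \<Longrightarrow> s x \<in> D" using sp by (simp add: permutes_in_image)
  have aD: "\<And>x. x \<in> D \<Longrightarrow> a x \<in> D" using ap by (simp add: permutes_in_image)
  have sinj: "\<And>x y. s x = s y \<longleftrightarrow> x = y" using permutes_inj[OF sp] by (simp add: inj_eq)
  have ainj: "\<And>x y. a x = a y \<longleftrightarrow> x = y" using permutes_inj[OF ap] by (simp add: inj_eq)
  have s1: "\<And>x. x \<in> D \<Longrightarrow> s x \<noteq> x" and s2: "\<And>x. x \<in> D \<Longrightarrow> s (s x) \<noteq> x"
    using T3_s[OF sp finD] t3 unfolding T3_def by auto
  obtain x0 where x0: "x0 \<in> D" using neD by auto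
  define y0 where "y0 = a x0"
  define u1 where "u1 = s y0"
  define c1 where "c1 = a u1"
  define z1 where "z1 = s c1"
  define u2 where "u2 = s x0"
  define c2 where "c2 = a u2"
  define z2 where "z2 = s c2"
  have inD: "y0 \<in> D" "u1 \<in> D" "c1 \<in> D" "z1 \<in> D" "u2 \<in> D" "c2 \<in> D" "z2 \<in> D"
    "a z1 \<in> D" "a z2 \<in> D"
    using x0 sD aD by (auto simp: y0_def u1_def c1_def z1_def u2_def c2_def z2_def)
  have ay0: "a y0 = x0" using ainv x0 y0_def by auto
  have az1: "s (a z1) = x0" using f3[OF x0] by (simp add: y0_def u1_def c1_def z1_def)
  have az2: "s (a z2) = y0" using f3[OF inD(1)] by (simp add: ay0 u2_def c2_def z2_def)
  have d: "x0 \<noteq> y0" "u1 \<noteq> x0" "u1 \<noteq> y0" "u2 \<noteq> x0" "u2 \<noteq> y0" "c1 \<noteq> c2"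
    "x0 \<noteq> c1" "x0 \<noteq> c2" "y0 \<noteq> c1" "y0 \<noteq> c2"
    "z1 \<noteq> x0" "z1 \<noteq> y0" "z1 \<noteq> u1" "z1 \<noteq> u2"
    "z2 \<noteq> x0" "z2 \<noteq> y0" "z2 \<noteq> u1" "z2 \<noteq> u2"
  proof -
    show "x0 \<noteq> y0" using ainv[OF x0] y0_def by metis
    show "u1 \<noteq> x0" using fn[OF x0] by (simp add: u1_def y0_def)
    show "u1 \<noteq> y0" using s1 inD by (simp add: u1_def)
    show "u2 \<noteq> x0" using s1 x0 by (simp add: u2_def)
    show "u2 \<noteq> y0" using fn[OF inD(1)] by (simp add: u2_def ay0)
    show "c1 \<noteq> c2" using \<open>x0 \<noteq> y0\<close> by (simp add: c1_def c2_def ainj u1_def u2_def sinj)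
    show "x0 \<noteq> c1" using s1[OF inD(1)] ainv[OF x0] ainv[OF inD(2)] by (metis c1_def u1_def y0_def)
    show "x0 \<noteq> c2" using fn[OF inD(1)] ainv[OF x0] ainv[OF inD(5)] ay0 by (metis c2_def u2_def y0_def)
    show "y0 \<noteq> c1" using fn[OF x0] ainv[OF inD(1)] ainv[OF inD(2)] ay0 by (metis c1_def u1_def y0_def)
    show "y0 \<noteq> c2" using s1[OF x0] ainv[OF inD(1)] ainv[OF inD(5)] ay0 by (metis c2_def u2_def)
    show "z1 \<noteq> x0" using f3[OF x0] fn[OF x0] by (auto simp: z1_def c1_def u1_def y0_def)
    show "z1 \<noteq> y0" using az1 s1[OF x0] ay0 by auto
    show "z1 \<noteq> u1" using fn[OF inD(2)] by (simp add: z1_def c1_def)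
    show "z2 \<noteq> y0"
    proof
      assume h: "z2 = y0"
      have e1: "s (a u2) = z2" by (simp add: z2_def c2_def)
      have e2: "s (a y0) = u2" by (simp add: ay0 u2_def)
      show False using f3[OF inD(1)] h e1 e2 fn[OF inD(1)] by metis
    qed
    show "z2 \<noteq> x0" by (metis az2 s1 inD(1) y0_def)
    show "z2 \<noteq> u2" using fn[OF inD(5)] by (simp add: z2_def c2_def)
    show "z1 \<noteq> u2"
    proof
      assume "z1 = u2"
      then have "x0 = z2" using az1 by (simp add: z2_def c2_def)
      then have "s (a x0) = y0" using az2 by simp
      then show False using s1[OF inD(1)] by (simp add: y0_def)
    qed
    show "z2 \<noteq> u1"
    proof
      assume "z2 = u1"
      then have "y0 = z1" using az2 by (simp add: z1_def c1_def)
      then show False using \<open>z1 \<noteq> y0\<close> by simp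
    qed
  qed

  define N where "N = Suc (Max D)"
  have ltN: "\<And>x. x \<in> D \<Longrightarrow> x < N" using finD by (simp add: N_def le_imp_less_Suc)
  define p1 where "p1 = N"
  define q1 where "q1 = N + 1"
  define p2 where "p2 = N + 2"
  define q2 where "q2 = N + 3"
  define r1 where "r1 = N + 4"
  define r2 where "r2 = N + 5"
  note nd = p1_def q1_def p2_def q2_def r1_def r2_def
  have lts: "x0 < N" "y0 < N" "u1 < N" "c1 < N" "z1 < N" "u2 < N" "c2 < N" "z2 < N" "a z1 < N" "a z2 < N"
    using ltN x0 inD by auto
  define s1 where "s1 = s(c1 := r1, r1 := s c1)"
  define s2 where "s2 = s1(c2 := r2, r2 := s1 c2)"
  define s' where "s' = (\<lambda>x. if x = p1 then q1 else if x = q1 then p2 else if x = p2 then q2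
      else if x = q2 then p1 else s2 x)"
  define a' where "a' = (\<lambda>x. if x = x0 then p1 else if x = p1 then x0 else if x = y0 then p2
      else if x = p2 then y0 else if x = q1 then r1 else if x = r1 then q1 else if x = q2 then r2
      else if x = r2 then q2 else a x)"
  define B where "B = insert r2 (insert r1 D)"
  define P where "P = {p1, q1, p2, q2}"
  define D' where "D' = B \<union> P"
  have Es: "s' x = s x" if "x \<in> D" "x \<noteq> c1" "x \<noteq> c2" for x
  proof -
    have "x < N" using ltN that by blast
    then show ?thesis using that by (simp add: s'_def s2_def s1_def nd)
  qed
  have Ea: "a' x = a x" if "x \<in> D" "x \<noteq> x0" "x \<noteq> y0" for x
  proof -
    have "x < N" using ltN that by blast
    then show ?thesis using that by (simp add: a'_def nd)
  qed
  have sv: "s' c1 = r1" "s' c2 = r2" "s' r1 = z1" "s' r2 = z2" "s' p1 = q1" "s' q1 = p2"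
    "s' p2 = q2" "s' q2 = p1"
    using lts d by (simp_all add: s'_def s2_def s1_def nd z1_def z2_def)
  have av: "a' x0 = p1" "a' p1 = x0" "a' y0 = p2" "a' p2 = y0" "a' q1 = r1" "a' r1 = q1"
    "a' q2 = r2" "a' r2 = q2"
    using lts d by (simp_all add: a'_def nd)

  have newD: "\<And>x. x \<in> D \<Longrightarrow> x \<noteq> p1 \<and> x \<noteq> q1 \<and> x \<noteq> p2 \<and> x \<noteq> q2 \<and> x \<noteq> r1 \<and> x \<noteq> r2"
    using ltN by (fastforce simp: nd)
  have newD': "\<And>x. x \<in> D \<Longrightarrow> p1 \<noteq> x \<and> q1 \<noteq> x \<and> p2 \<noteq> x \<and> q2 \<noteq> x \<and> r1 \<noteq> x \<and> r2 \<noteq> x"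
    using newD by metis
  have Fdist: "u1 \<noteq> u2" using d(1) by (simp add: u1_def u2_def sinj)
  define F where "F = {x0, u1, z1, y0, u2, z2}"
  have phi_gen: "s' (a' x) = s (a x)" if "x \<in> D" "x \<notin> F" for x
  proof -
    have "a' x = a x" using Ea that by (auto simp: F_def)
    moreover have "a x \<noteq> c1" "a x \<noteq> c2" using that by (auto simp: F_def c1_def c2_def ainj)
    ultimately show ?thesis using Es aD that by simp
  qed
  have phi_clos: "s (a x) \<notin> F" if "x \<in> D" "x \<notin> F" for x
  proof
    assume h: "s (a x) \<in> F"
    have e: "s (a (s (a (s (a x))))) = x" using f3 that by simp
    have u1e: "s (a x0) = u1" "s (a u1) = z1" "s (a y0) = u2" "s (a u2) = z2"
      by (simp add: u1_def y0_def, simp add: z1_def c1_def, simp add: ay0 u2_def, simp add: z2_def c2_def)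
    from h consider "s (a x) = x0" | "s (a x) = u1" | "s (a x) = z1" | "s (a x) = y0"
      | "s (a x) = u2" | "s (a x) = z2" by (auto simp: F_def)
    then show False
    proof cases
      case 1 then show ?thesis using e u1e that by (auto simp: F_def)
    next
      case 2 then have "a x = a x0" using u1e sinj by metis
      then show ?thesis using that by (auto simp: F_def ainj)
    next
      case 3 then have "a x = a u1" using u1e sinj by metis
      then show ?thesis using that by (auto simp: F_def ainj)
    next
      case 4 then show ?thesis using e u1e that by (auto simp: F_def)
    next
      case 5 then have "a x = a y0" using u1e sinj by metis
      then show ?thesis using that by (auto simp: F_def ainj)
    next
      case 6 then have "a x = a u2" using u1e sinj by metis
      then show ?thesis using that by (auto simp: F_def ainj)
    qed
  qed
  have az1': "a' z1 = a z1" "a' z2 = a z2" "a' u1 = c1" "a' u2 = c2"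
    using Ea inD d x0 by (auto simp: c1_def c2_def)
  have saz: "s' (a z1) = x0" "s' (a z2) = y0" "s' y0 = u1" "s' x0 = u2"
  proof -
    have "a z1 \<noteq> c1" "a z1 \<noteq> c2" "a z2 \<noteq> c1" "a z2 \<noteq> c2"
      using d by (auto simp: c1_def c2_def ainj)
    then show "s' (a z1) = x0" "s' (a z2) = y0" using Es inD az1 az2 by auto
    show "s' y0 = u1" "s' x0 = u2" using Es inD x0 d by (auto simp: u1_def u2_def)
  qed
  have phi3: "(s' \<circ> a') ((s' \<circ> a') ((s' \<circ> a') x)) = x \<and> (s' \<circ> a') x \<noteq> x" if "x \<in> D'" for x
  proof -
    have "x \<in> D \<and> x \<notin> F \<or> (x \<in> F \<or> x \<in> {p1, q1, p2, q2, r1, r2})"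
      using that by (auto simp: D'_def B_def P_def)
    moreover
    { assume "x \<in> D" "x \<notin> F"
      then have ?thesis using phi_gen[of x] phi_gen[of "s (a x)"] phi_gen[of "s (a (s (a x)))"]
        phi_clos[of x] phi_clos[of "s (a x)"] fn[of x] sD aD f3[of x] by simp }
    moreover
    { assume h: "x \<in> F \<or> x \<in> {p1, q1, p2, q2, r1, r2}"
      note ne = newD[OF x0] newD[OF inD(1)] newD[OF inD(2)]
          newD[OF inD(4)] newD[OF inD(5)] newD[OF inD(7)]
          newD'[OF x0] newD'[OF inD(1)] newD'[OF inD(2)]
          newD'[OF inD(4)] newD'[OF inD(5)] newD'[OF inD(7)]
      have nn: "p1 \<noteq> q1" "p1 \<noteq> p2" "p1 \<noteq> q2" "p1 \<noteq> r1" "p1 \<noteq> r2"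
        "q1 \<noteq> p2" "q1 \<noteq> q2" "q1 \<noteq> r1" "q1 \<noteq> r2" "p2 \<noteq> q2" "p2 \<noteq> r1"
        "p2 \<noteq> r2" "q2 \<noteq> r1" "q2 \<noteq> r2" "r1 \<noteq> r2" by (simp_all add: nd)
      define Q where "Q = (\<lambda>v. (s' \<circ> a') ((s' \<circ> a') ((s' \<circ> a') v)) = v \<and> (s' \<circ> a') v \<noteq> v)"
      have "Q x0" "Q u1" "Q z1" "Q y0" "Q u2" "Q z2" "Q p1" "Q q1" "Q p2" "Q q2" "Q r1" "Q r2"
        unfolding Q_def
        apply (simp_all only: o_apply sv av az1' saz)
        apply (simp_all add: ne nn nn[THEN not_sym] d d[THEN not_sym])
        done
      then have "Q x" using h unfolding F_def by auto
      then have ?thesis unfolding Q_def . }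
    ultimately show ?thesis by blast
  qed
  have nn: "p1 \<noteq> q1" "p1 \<noteq> p2" "p1 \<noteq> q2" "p1 \<noteq> r1" "p1 \<noteq> r2"
        "q1 \<noteq> p2" "q1 \<noteq> q2" "q1 \<noteq> r1" "q1 \<noteq> r2" "p2 \<noteq> q2" "p2 \<noteq> r1"
        "p2 \<noteq> r2" "q2 \<noteq> r1" "q2 \<noteq> r2" "r1 \<noteq> r2" by (simp_all add: nd)
  note nn' = nn nn[THEN not_sym]
  have nD: "p1 \<notin> D" "q1 \<notin> D" "p2 \<notin> D" "q2 \<notin> D" "r1 \<notin> D" "r2 \<notin> D"
    using newD by blast+
  interpret i1: ins s s1 D c1 r1
    by unfold_locales (simp_all add: sp inD nD s1_def)
  interpret i2: ins s1 s2 "insert r1 D" c2 r2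
    by unfold_locales (use i1.g_perm inD nD nn in \<open>simp_all add: s2_def\<close>)
  have s2perm: "s2 permutes B" using i2.g_perm by (simp add: B_def)
  have finB: "finite B" using finD by (simp add: B_def)
  have PnB: "p1 \<notin> B" "q1 \<notin> B" "p2 \<notin> B" "q2 \<notin> B" using nD nn' by (auto simp: B_def)
  have s2fix: "s2 p1 = p1" "s2 q1 = q1" "s2 p2 = p2" "s2 q2 = q2"
    using PnB s2perm by (simp_all add: permutes_not_in)
  define cyc where "cyc = Transposition.transpose p1 q2 \<circ> Transposition.transpose p1 p2 \<circ>
     Transposition.transpose p1 q1"
  have cycperm: "cyc permutes D'" unfolding cyc_def
    by (intro permutes_compose permutes_swap_id) (auto simp: D'_def P_def)
  have s'eq: "s' = s2 \<circ> cyc"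
  proof
    fix x
    show "s' x = (s2 \<circ> cyc) x"
      by (cases "x = p1"; cases "x = q1"; cases "x = p2"; cases "x = q2")
        (simp_all add: s'_def cyc_def Transposition.transpose_def nn' s2fix)
  qed
  have s'perm: "s' permutes D'" unfolding s'eq
    by (rule permutes_compose[OF cycperm]) (rule permutes_subset[OF s2perm], auto simp: D'_def)
  have DD': "D \<subseteq> D'" by (auto simp: D'_def B_def)
  have newin: "p1 \<in> D'" "q1 \<in> D'" "p2 \<in> D'" "q2 \<in> D'" "r1 \<in> D'" "r2 \<in> D'"
    by (auto simp: D'_def B_def P_def)
  have finD': "finite D'" using finD by (simp add: D'_def B_def P_def)
  have a'out: "a' x = x" if "x \<notin> D'" for x
  proof -
    have "x \<notin> D" using that DD' by auto
    moreover have "x \<noteq> x0" "x \<noteq> y0" using x0 inD \<open>x \<notin> D\<close> by auto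
    ultimately show ?thesis using that newin Ea ap
      by (auto simp: a'_def permutes_not_in)
  qed
  have a'old: "a' x \<in> D' \<and> a' (a' x) = x \<and> a' x \<noteq> x" if "x \<in> D" "x \<noteq> x0" "x \<noteq> y0" for x
  proof -
    have "a x \<in> D" "a x \<noteq> x0" "a x \<noteq> y0" "a (a x) = x" "a x \<noteq> x"
      using that aD ainv ay0 y0_def by metis+
    then show ?thesis using Ea that DD' by auto
  qed
  have a'new: "a' x \<in> D' \<and> a' (a' x) = x \<and> a' x \<noteq> x" if "x \<in> D'" "x \<notin> D \<or> x = x0 \<or> x = y0" for x
  proof -
    have "x \<in> {x0, y0, p1, q1, p2, q2, r1, r2}" using that by (auto simp: D'_def B_def P_def)
    then show ?thesis using av newin x0 inD DD' nn' newD[OF x0] newD[OF inD(1)]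
        newD'[OF x0] newD'[OF inD(1)] by auto
  qed
  have a'perm: "a' permutes D'"
    by (rule invol_permutes) (use a'old a'new a'out DD' in \<open>blast+\<close>)
  define R' where "R' = {(z, s' z) | z. z \<in> D'} \<union> {(z, a' z) | z. z \<in> D'}"
  have es: "(z, s' z) \<in> R'\<^sup>*" if "z \<in> D'" for z using that by (auto simp: R'_def)
  have ea: "(z, a' z) \<in> R'\<^sup>*" if "z \<in> D'" for z using that by (auto simp: R'_def)
  have x0D': "x0 \<in> D'" "y0 \<in> D'" using x0 inD DD' by auto
  have ch1: "(x0, y0) \<in> R'\<^sup>*"
  proof -
    have "(x0, p1) \<in> R'\<^sup>*" using ea[OF x0D'(1)] av by simp
    also have "(p1, q1) \<in> R'\<^sup>*" using es[OF newin(1)] sv by simp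
    also have "(q1, p2) \<in> R'\<^sup>*" using es[OF newin(2)] sv by simp
    also have "(p2, y0) \<in> R'\<^sup>*" using ea[OF newin(3)] av by simp
    finally show ?thesis .
  qed
  have ch2: "(y0, x0) \<in> R'\<^sup>*"
  proof -
    have "(y0, p2) \<in> R'\<^sup>*" using ea[OF x0D'(2)] av by simp
    also have "(p2, q2) \<in> R'\<^sup>*" using es[OF newin(3)] sv by simp
    also have "(q2, p1) \<in> R'\<^sup>*" using es[OF newin(4)] sv by simp
    also have "(p1, x0) \<in> R'\<^sup>*" using ea[OF newin(1)] av by simp
    finally show ?thesis .
  qed
  have oldedge: "(u, v) \<in> R'\<^sup>*" if "(u, v) \<in> {(z, s z) | z. z \<in> D} \<union> {(z, a z) | z. z \<in> D}" for u v
  proof -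
    from that consider "u \<in> D" "v = s u" | "u \<in> D" "v = a u" by blast
    then show ?thesis
    proof cases
      case 1
      show ?thesis
      proof (cases "u = c1 \<or> u = c2")
        case True
        then show ?thesis
        proof
          assume u: "u = c1"
          have "(c1, r1) \<in> R'\<^sup>*" using es[of c1] sv inD DD' by auto
          also have "(r1, z1) \<in> R'\<^sup>*" using es[OF newin(5)] sv by simp
          finally show ?thesis using 1 u z1_def by simp
        next
          assume u: "u = c2"
          have "(c2, r2) \<in> R'\<^sup>*" using es[of c2] sv inD DD' by auto
          also have "(r2, z2) \<in> R'\<^sup>*" using es[OF newin(6)] sv by simp
          finally show ?thesis using 1 u z2_def by simp
        qed
      next
        case False
        then show ?thesis using es[of u] Es[of u] 1 DD' by auto
      qed
    next
      case 2
      show ?thesis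
      proof (cases "u = x0 \<or> u = y0")
        case True
        then show ?thesis using ch1 ch2 2 y0_def ay0 by auto
      next
        case False
        then show ?thesis using ea[of u] Ea[of u] 2 DD' by auto
      qed
    qed
  qed
  have oldconn: "(u, v) \<in> R'\<^sup>*" if "u \<in> D" "v \<in> D" for u v
  proof -
    have "(u, v) \<in> ({(z, s z) | z. z \<in> D} \<union> {(z, a z) | z. z \<in> D})\<^sup>*" using conn that by blast
    then show ?thesis
    proof (induction rule: rtrancl_induct)
      case base then show ?case by simp
    next
      case (step y z) then show ?case using oldedge[of y z] by (meson rtrancl_trans)
    qed
  qed
  have toX: "(x, x0) \<in> R'\<^sup>* \<and> (x0, x) \<in> R'\<^sup>*" if "x \<in> D'" for x
  proof -
    have xp1: "(x0, p1) \<in> R'\<^sup>*" "(p1, x0) \<in> R'\<^sup>*" using ea[OF x0D'(1)] ea[OF newin(1)] av by simp_all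
    have xq1: "(x0, q1) \<in> R'\<^sup>*" using xp1 es[OF newin(1)] sv by (metis rtrancl_trans)
    have xp2: "(x0, p2) \<in> R'\<^sup>*" using xq1 es[OF newin(2)] sv by (metis rtrancl_trans)
    have xq2: "(x0, q2) \<in> R'\<^sup>*" using xp2 es[OF newin(3)] sv by (metis rtrancl_trans)
    have xr1: "(x0, r1) \<in> R'\<^sup>*" using xq1 ea[OF newin(2)] av by (metis rtrancl_trans)
    have xr2: "(x0, r2) \<in> R'\<^sup>*" using xq2 ea[OF newin(4)] av by (metis rtrancl_trans)
    have p2x: "(p2, x0) \<in> R'\<^sup>*" using ch2 ea[OF newin(3)] av by (metis rtrancl_trans)
    have q2x: "(q2, x0) \<in> R'\<^sup>*" using xp1 es[OF newin(4)] sv by (metis rtrancl_trans)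
    have q1x: "(q1, x0) \<in> R'\<^sup>*" using p2x es[OF newin(2)] sv by (metis rtrancl_trans)
    have r1x: "(r1, x0) \<in> R'\<^sup>*" using q1x ea[OF newin(5)] av by (metis rtrancl_trans)
    have r2x: "(r2, x0) \<in> R'\<^sup>*" using q2x ea[OF newin(6)] av by (metis rtrancl_trans)
    have "x \<in> D \<or> x \<in> {p1, q1, p2, q2, r1, r2}" using that by (auto simp: D'_def B_def P_def)
    then show ?thesis
      using oldconn[OF _ x0] oldconn[OF x0] xp1 xq1 xp2 xq2 xr1 xr2 p2x q2x q1x r1x r2x by auto
  qed
  have conn': "\<forall>x\<in>D'. \<forall>y\<in>D'. (x, y) \<in> R'\<^sup>*" using toX by (meson rtrancl_trans)
  have tri': "tri_map D' s' a'"
    unfolding tri_map_def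
  proof (intro conjI)
    show "finite D'" by (rule finD')
    show "D' \<noteq> {}" using newin by auto
    show "s' permutes D'" by (rule s'perm)
    show "a' permutes D'" by (rule a'perm)
    show "\<forall>x\<in>D'. a' x \<noteq> x \<and> a' (a' x) = x" using a'old a'new by blast
    show "\<forall>x\<in>D'. ((s' \<circ> a') ^^ 3) x = x \<and> (s' \<circ> a') x \<noteq> x"
      using phi3 by (simp add: numeral_3_eq_3)
    show "\<forall>x\<in>D'. \<forall>y\<in>D'. (x, y) \<in> ({(z, s' z) |z. z \<in> D'} \<union> {(z, a' z) |z. z \<in> D'})\<^sup>*"
      using conn' unfolding R'_def .
  qed
  have orbB: "dorbit s' x = dorbit s2 x" if "x \<in> B" for x
  proof (rule dorbit_agree)
    fix u assume "u \<in> dorbit s2 x"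
    then have "u \<in> B" using dorbit_sub[OF s2perm that] by blast
    then have "u \<noteq> p1" "u \<noteq> q1" "u \<noteq> p2" "u \<noteq> q2" using PnB by auto
    then show "s' u = s2 u" by (simp add: s'_def)
  qed
  have orbP: "dorbit s' d = P" if "d \<in> P" for d
  proof
    show "dorbit s' d \<subseteq> P"
      by (rule dorbit_min) (use that in \<open>auto simp: P_def sv\<close>)
    have h: "d \<in> dorbit s' d" "s' d \<in> dorbit s' d" "s' (s' d) \<in> dorbit s' d"
      "s' (s' (s' d)) \<in> dorbit s' d"
      by (rule dorbit_self, (rule dorbit_step)+, rule dorbit_self,
          (rule dorbit_step)+, rule dorbit_self, (rule dorbit_step)+, rule dorbit_self)
    show "P \<subseteq> dorbit s' d"
      using that h by (auto simp: P_def sv)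
  qed
  have cardP: "card P = 4" using nn' by (simp add: P_def)
  have Pnot: "P \<notin> dorbit s2 ` B"
  proof
    assume "P \<in> dorbit s2 ` B"
    then obtain x where "x \<in> B" "P = dorbit s2 x" by auto
    then have "p1 \<in> B" using dorbit_sub[OF s2perm] by (auto simp: P_def)
    then show False using PnB by simp
  qed
  have punct: "punctures D' s' = insert P (dorbit s2 ` B)"
  proof -
    have "punctures D' s' = dorbit s' ` B \<union> dorbit s' ` P" by (simp add: punctures_def D'_def image_Un)
    also have "dorbit s' ` B = dorbit s2 ` B" by (rule image_cong[OF refl orbB])
    also have "dorbit s' ` P = (\<lambda>_. P) ` P" by (rule image_cong[OF refl orbP])
    also have "(\<lambda>_. P) ` P = {P}" by (simp add: P_def)
    finally show ?thesis by simp
  qed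
  have cardpunct: "card (punctures D' s') = Suc (card (punctures D s))"
  proof -
    have "card (dorbit s2 ` B) = card (dorbit s1 ` insert r1 D)"
      using i2.card_orbs finD by (simp add: B_def)
    also have "\<dots> = card (dorbit s ` D)" using i1.card_orbs finD by simp
    finally show ?thesis using punct Pnot finB by (simp add: punctures_def)
  qed
  have cardD': "card D' = card D + 6"
    using finD nD nn' by (simp add: D'_def B_def P_def)
  have euler: "euler_char D' s' = euler_char D s"
  proof -
    have "(card D + 6) div 3 = card D div 3 + 2" "(card D + 6) div 2 = card D div 2 + 3" by presburger+
    then show ?thesis using cardpunct cardD' unfolding euler_char_def punctures_def by simp
  qed
  have finorb: "finite (dorbit s' x)" if "x \<in> D'" for x
    using dorbit_finite[OF s'perm finD' that] .
  have val_old: "valency s x \<le> valency s' x" if "x \<in> D" for x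
  proof -
    have "x \<in> B" using that by (simp add: B_def)
    have "dorbit s x \<subseteq> dorbit s1 x" by (rule i1.sub)
    also have "\<dots> \<subseteq> dorbit s2 x" by (rule i2.sub)
    also have "\<dots> = dorbit s' x" using orbB[OF \<open>x \<in> B\<close>] by simp
    finally show ?thesis unfolding valency_def using finorb that DD' by (intro card_mono) auto
  qed
  have valP: "valency s' x = 4" if "x \<in> P" for x
    using orbP[OF that] cardP by (simp add: valency_def)
  have t3': "\<And>x. x \<in> D \<Longrightarrow> 3 \<le> card (dorbit s x)" using t3 by (simp add: T3_def valency_def)
  have valr1: "4 \<le> valency s' r1"
  proof -
    have rB: "r1 \<in> B" by (simp add: B_def)
    have "insert r1 (dorbit s (s c1)) \<subseteq> dorbit s1 r1" by (rule i1.orb_r_sup)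
    also have "\<dots> \<subseteq> dorbit s2 r1" by (rule i2.sub)
    also have "\<dots> = dorbit s' r1" using orbB[OF rB] by simp
    finally have sub: "insert r1 (dorbit s (s c1)) \<subseteq> dorbit s' r1" .
    have "r1 \<notin> dorbit s (s c1)" using dorbit_sub[OF sp sD[OF inD(3)]] nD by blast
    moreover have "finite (dorbit s (s c1))" using dorbit_finite[OF sp finD sD[OF inD(3)]] .
    ultimately have "card (insert r1 (dorbit s (s c1))) = Suc (card (dorbit s (s c1)))" by simp
    moreover have "card (insert r1 (dorbit s (s c1))) \<le> card (dorbit s' r1)"
      using sub finorb[OF newin(5)] by (rule card_mono[rotated])
    ultimately show ?thesis using t3'[OF sD[OF inD(3)]] by (simp add: valency_def)
  qed
  have valr2: "4 \<le> valency s' r2"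
  proof -
    have rB: "r2 \<in> B" by (simp add: B_def)
    have s1c2: "s1 c2 = s c2" using d nn' inD nD by (auto simp: s1_def)
    have "insert r2 (dorbit s (s c2)) \<subseteq> insert r2 (dorbit s1 (s c2))" using i1.sub by auto
    also have "\<dots> \<subseteq> dorbit s2 r2" using i2.orb_r_sup s1c2 by simp
    also have "\<dots> = dorbit s' r2" using orbB[OF rB] by simp
    finally have sub: "insert r2 (dorbit s (s c2)) \<subseteq> dorbit s' r2" .
    have "r2 \<notin> dorbit s (s c2)" using dorbit_sub[OF sp sD[OF inD(6)]] nD by blast
    moreover have "finite (dorbit s (s c2))" using dorbit_finite[OF sp finD sD[OF inD(6)]] .
    ultimately have "card (insert r2 (dorbit s (s c2))) = Suc (card (dorbit s (s c2)))" by simp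
    moreover have "card (insert r2 (dorbit s (s c2))) \<le> card (dorbit s' r2)"
      using sub finorb[OF newin(6)] by (rule card_mono[rotated])
    ultimately show ?thesis using t3'[OF sD[OF inD(6)]] by (simp add: valency_def)
  qed
  have val_new: "\<forall>x\<in>D'-D. 4 \<le> valency s' x"
  proof
    fix x assume "x \<in> D' - D"
    then have "x \<in> P \<or> x = r1 \<or> x = r2" by (auto simp: D'_def B_def)
    then show "4 \<le> valency s' x" using valP valr1 valr2 by auto
  qed
  have val_a: "\<forall>x\<in>D. a' x = a x \<or> 4 \<le> valency s' (a' x)"
  proof
    fix x assume x: "x \<in> D"
    show "a' x = a x \<or> 4 \<le> valency s' (a' x)"
    proof (cases "x = x0 \<or> x = y0")
      case True
      then have "a' x \<in> P" using av by (auto simp: P_def)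
      then show ?thesis using valP by simp
    next
      case False then show ?thesis using Ea x by simp
    qed
  qed
  show ?thesis
    using tri' cardpunct euler DD' val_old val_new val_a by blast
qed

lemma step:
  assumes "is_triangulation_of g n D s a" "T3 D s a"
  obtains D' s' a' where "is_triangulation_of g (Suc n) D' s' a'"
    "\<forall>x\<in>D. valency s x \<le> valency s' x" "\<forall>x\<in>D'-D. 4 \<le> valency s' x"
    "\<forall>x\<in>D. a' x = a x \<or> 4 \<le> valency s' (a' x)" "D \<subseteq> D'"
proof -
  have tri: "tri_map D s a" using assms unfolding is_triangulation_of_def by simp
  from construct[OF tri assms(2)] obtain D' s' a' where h: "tri_map D' s' a'"
    "card (punctures D' s') = Suc (card (punctures D s))"
     "euler_char D' s' = euler_char D s" "D \<subseteq> D'"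
     "\<forall>x\<in>D. valency s x \<le> valency s' x" "\<forall>x\<in>D'-D. 4 \<le> valency s' x"
     "\<forall>x\<in>D. a' x = a x \<or> 4 \<le> valency s' (a' x)" by blast
  show ?thesis
    by (rule that[of D' s' a']) (use h assms in \<open>auto simp: is_triangulation_of_def\<close>)
qed

theorem lemma5p2:
  fixes g n :: nat
  assumes "n \<ge> 1"
  shows "(has_triangulation g n T3 \<longrightarrow> has_triangulation g (Suc n) T3) \<and>
         (has_triangulation g n T3half \<longrightarrow> has_triangulation g (Suc n) T3half) \<and>
         (has_triangulation g n T4 \<longrightarrow> has_triangulation g (Suc n) T4)"
proof (intro conjI impI)
  assume "has_triangulation g n T3"
  then obtain D s a where h: "is_triangulation_of g n D s a" "T3 D s a"
    unfolding has_triangulation_def by blast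
  obtain D' s' a' where h': "is_triangulation_of g (Suc n) D' s' a'"
    "\<forall>x\<in>D. valency s x \<le> valency s' x" "\<forall>x\<in>D'-D. 4 \<le> valency s' x"
    by (rule step[OF h])
  have "T3 D' s' a'" unfolding T3_def
  proof
    fix x assume "x \<in> D'"
    then show "3 \<le> valency s' x" using h(2) h'(2,3) unfolding T3_def
      by (cases "x \<in> D") force+
  qed
  then show "has_triangulation g (Suc n) T3" using h' unfolding has_triangulation_def by blast
next
  assume "has_triangulation g n T4"
  then obtain D s a where h: "is_triangulation_of g n D s a" "T4 D s a"
    unfolding has_triangulation_def by blast
  have t3: "T3 D s a" using h(2) unfolding T3_def T4_def by force
  obtain D' s' a' where h': "is_triangulation_of g (Suc n) D' s' a'"
    "\<forall>x\<in>D. valency s x \<le> valency s' x" "\<forall>x\<in>D'-D. 4 \<le> valency s' x"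
    by (rule step[OF h(1) t3])
  have "T4 D' s' a'" unfolding T4_def
  proof
    fix x assume "x \<in> D'"
    then show "4 \<le> valency s' x" using h(2) h'(2,3) unfolding T4_def
      by (cases "x \<in> D") force+
  qed
  then show "has_triangulation g (Suc n) T4" using h' unfolding has_triangulation_def by blast
next
  assume "has_triangulation g n T3half"
  then obtain D s a where h: "is_triangulation_of g n D s a" "T3half D s a"
    unfolding has_triangulation_def by blast
  have t3: "T3 D s a" using h(2) unfolding T3half_def by simp
  have ap: "a permutes D" using h(1) unfolding is_triangulation_of_def tri_map_def by simp
  obtain D' s' a' where h': "is_triangulation_of g (Suc n) D' s' a'"
    "\<forall>x\<in>D. valency s x \<le> valency s' x" "\<forall>x\<in>D'-D. 4 \<le> valency s' x"
    "\<forall>x\<in>D. a' x = a x \<or> 4 \<le> valency s' (a' x)"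
    by (rule step[OF h(1) t3])
  have "T3 D' s' a'" unfolding T3_def
  proof
    fix x assume "x \<in> D'"
    then show "3 \<le> valency s' x" using t3 h'(2,3) unfolding T3_def
      by (cases "x \<in> D") force+
  qed
  moreover have "\<forall>x\<in>D'. 4 \<le> valency s' x \<or> 4 \<le> valency s' (a' x)"
  proof
    fix x assume x: "x \<in> D'"
    show "4 \<le> valency s' x \<or> 4 \<le> valency s' (a' x)"
    proof (cases "x \<in> D")
      case False then show ?thesis using x h'(3) by auto
    next
      case True
      have ax: "a x \<in> D" using ap True by (simp add: permutes_in_image)
      have "4 \<le> valency s x \<or> 4 \<le> valency s (a x)" using h(2) True unfolding T3half_def by blast
      moreover have "valency s x \<le> valency s' x" "valency s (a x) \<le> valency s' (a x)"
        using h'(2) True ax by auto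
      moreover have "a' x = a x \<or> 4 \<le> valency s' (a' x)" using h'(4) True by blast
      ultimately show ?thesis by force
    qed
  qed
  ultimately have "T3half D' s' a'" unfolding T3half_def by blast
  then show "has_triangulation g (Suc n) T3half" using h' unfolding has_triangulation_def by blast
qed


end
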